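(* Let $N=\{1,\dots,n\}$ be a set of $n\ge 1$ agents and $M$ a set of $m$ indivisible goods. Write $m = kn + r$ with $k=\lfloor m/n\rfloor$ and $0\le r<n$. Suppose every agent $i$ has an additive leveled valuation $V_i:2^M\to\mathbb{R}_{\ge 0}$. Fix an arbitrary picking order $\sigma=(\sigma_1,\dots,\sigma_n)$ of the agents and run the following sequential procedure: for $t=1,\dots,n-r$, agent $\sigma_t$ receives a bundle of exactly $k$ still-unallocated goods that maximizes $V_{\sigma_t}$ among all such bundles; then for $t=n-r+1,\dots,n$, agent $\sigma_t$ receives a bundle of exactly $k+1$ still-unallocated goods that maximizes $V_{\sigma_t}$ among all such bundles (ties broken arbitrarily). Then the resulting allocation $B=(B_1,\dots,B_n)$ satisfies $V_i(B_i)\ge \frac{k}{k+1}\,\mu_i$ for every agent $i\in N$, i.e., it is $\frac{\lfloor m/n\rfloor}{\lfloor m/n\rfloor+1}$-MMS. In particular, a $\frac{\lfloor m/n\rfloor}{\lfloor m/n\rfloor+1}$-MMS allocation always exists under additive leveled valuations.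
   Context: A valuation $V:2^M\to\mathbb{R}_{\ge 0}$ is additive if $V(S)=\sum_{g\in S}V(\{g\})$ for all $S\subseteq M$. It is leveled if for any bundles $S,T\subseteq M$ with $|S|>|T|$ we have $V(S)>V(T)$. It is additive leveled if it is both. An allocation is a partition $B=(B_1,\dots,B_n)$ of $M$ into $n$ pairwise disjoint bundles (possibly empty) with $\bigcup_i B_i=M$, where $B_i$ is given to agent $i$; $\Pi_n(M)$ denotes the set of all such partitions. The maximin share of agent $i$ is $\mu_i=\max_{B'\in\Pi_n(M)}\min_{j\in N}V_i(B'_j)$. For $\alpha\in[0,1]$, an allocation $B$ is $\alpha$-MMS if $V_i(B_i)\ge \alpha\,\mu_i$ for all $i\in N$. *)

theory Defs
  imports Complex_Main
begin

text \<open>Agents are indexed by 0,...,n-1 (the paper's 1..n); goods form a finite set M.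
  A valuation is a function on bundles; only its values on subsets of M matter.\<close>

definition nonneg_valuation :: "'g set \<Rightarrow> ('g set \<Rightarrow> real) \<Rightarrow> bool" where
  "nonneg_valuation M V \<longleftrightarrow> (\<forall>S. S \<subseteq> M \<longrightarrow> V S \<ge> 0)"

definition additive :: "'g set \<Rightarrow> ('g set \<Rightarrow> real) \<Rightarrow> bool" where
  "additive M V \<longleftrightarrow> (\<forall>S. S \<subseteq> M \<longrightarrow> V S = (\<Sum>g\<in>S. V {g}))"

definition leveled :: "'g set \<Rightarrow> ('g set \<Rightarrow> real) \<Rightarrow> bool" where
  "leveled M V \<longleftrightarrow> (\<forall>S T. S \<subseteq> M \<longrightarrow> T \<subseteq> M \<longrightarrow> card S > card T \<longrightarrow> V S > V T)"

definition additive_leveled :: "'g set \<Rightarrow> ('g set \<Rightarrow> real) \<Rightarrow> bool" where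
  "additive_leveled M V \<longleftrightarrow> nonneg_valuation M V \<and> additive M V \<and> leveled M V"

definition is_allocation :: "nat \<Rightarrow> 'g set \<Rightarrow> (nat \<Rightarrow> 'g set) \<Rightarrow> bool" where
  "is_allocation n M B \<longleftrightarrow>
     (\<forall>i<n. B i \<subseteq> M) \<and>
     (\<forall>i<n. \<forall>j<n. i \<noteq> j \<longrightarrow> B i \<inter> B j = {}) \<and>
     (\<Union>i<n. B i) = M"

definition mms :: "nat \<Rightarrow> 'g set \<Rightarrow> ('g set \<Rightarrow> real) \<Rightarrow> real" where
  "mms n M V = Max {Min ((\<lambda>j. V (B j)) ` {..<n}) | B. is_allocation n M B}"

definition alpha_MMS ::
  "real \<Rightarrow> nat \<Rightarrow> 'g set \<Rightarrow> (nat \<Rightarrow> 'g set \<Rightarrow> real) \<Rightarrow> (nat \<Rightarrow> 'g set) \<Rightarrow> bool" where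
  "alpha_MMS \<alpha> n M V B \<longleftrightarrow>
     is_allocation n M B \<and> (\<forall>i<n. V i (B i) \<ge> \<alpha> * mms n M (V i))"

text \<open>A possible outcome (any tie-breaking) of the sequential procedure with picking
  order \<sigma> (a permutation of 0..n-1): at step t (0-based), agent \<sigma> t picks a
  V-maximal bundle of size k (if t < n - r) or k+1 (otherwise) among the goods not yet
  allocated, where k = m div n, r = m mod n.\<close>
definition procedure_outcome ::
  "nat \<Rightarrow> 'g set \<Rightarrow> (nat \<Rightarrow> 'g set \<Rightarrow> real) \<Rightarrow> (nat \<Rightarrow> nat) \<Rightarrow> (nat \<Rightarrow> 'g set) \<Rightarrow> bool" where
  "procedure_outcome n M V \<sigma> B \<longleftrightarrow>
     (\<forall>t<n.
        let k = card M div n; r = card M mod n;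
            s = (if t < n - r then k else k + 1);
            R = M - (\<Union>u<t. B (\<sigma> u))
        in B (\<sigma> t) \<subseteq> R \<and> card (B (\<sigma> t)) = s \<and>
           (\<forall>T. T \<subseteq> R \<longrightarrow> card T = s \<longrightarrow> V (\<sigma> t) T \<le> V (\<sigma> t) (B (\<sigma> t))))"

end

theory Submission imports Defs begin

lemma mms_attained:
  fixes V :: "'g set \<Rightarrow> real"
  assumes n1: "n \<ge> 1" and fin: "finite M" and nn: "nonneg_valuation M V"
  shows "\<exists>B. is_allocation n M B \<and> (\<forall>j<n. mms n M V \<le> V (B j)) \<and> mms n M V \<ge> 0"
proof -
  let ?S = "{Min ((\<lambda>j. V (B j)) ` {..<n}) | B. is_allocation n M B}"
  have "?S \<subseteq> Min ` Pow (V ` Pow M)"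
  proof
    fix x assume "x \<in> ?S"
    then obtain B where x: "x = Min ((\<lambda>j. V (B j)) ` {..<n})" and a: "is_allocation n M B" by blast
    have "(\<lambda>j. V (B j)) ` {..<n} \<subseteq> V ` Pow M" using a unfolding is_allocation_def by auto
    then show "x \<in> Min ` Pow (V ` Pow M)" using x by blast
  qed
  moreover have "finite (Min ` Pow (V ` Pow M))" using fin by simp
  ultimately have finS: "finite ?S" by (rule finite_subset)
  define B0 where "B0 = (\<lambda>j::nat. if j = 0 then M else {})"
  have "is_allocation n M B0" unfolding is_allocation_def B0_def using n1
    by (auto split: if_splits)
  hence "?S \<noteq> {}" by blast
  from Max_in[OF finS this] obtain B where a: "is_allocation n M B"
    and e: "mms n M V = Min ((\<lambda>j. V (B j)) ` {..<n})" unfolding mms_def by auto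
  have ne: "(\<lambda>j. V (B j)) ` {..<n} \<noteq> {}" using n1 by (auto simp: lessThan_empty_iff)
  have "\<forall>j<n. mms n M V \<le> V (B j)" using e by simp
  moreover have "mms n M V \<ge> 0" unfolding e using ne a nn
    unfolding is_allocation_def nonneg_valuation_def by (subst Min_ge_iff) auto
  ultimately show ?thesis using a by blast
qed

lemma alloc_card_sum:
  assumes fin: "finite M" and a: "is_allocation n M B"
  shows "(\<Sum>j<n. card (B j)) = card M"
proof -
  have "card (\<Union>j<n. B j) = (\<Sum>j<n. card (B j))"
    using a fin unfolding is_allocation_def
    by (intro card_UN_disjoint) (auto intro: finite_subset)
  thus ?thesis using a unfolding is_allocation_def by simp
qed

lemma fin_argmin:
  fixes f :: "'a \<Rightarrow> real"
  assumes "finite S" "S \<noteq> {}"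
  shows "\<exists>x\<in>S. \<forall>y\<in>S. f x \<le> f y"
proof -
  have "Min (f ` S) \<in> f ` S" using assms by simp
  then obtain x where "x \<in> S" "f x = Min (f ` S)" by auto
  thus ?thesis using assms by (metis Min_le finite_imageI imageI)
qed

lemma fin_argmax:
  fixes f :: "'a \<Rightarrow> real"
  assumes "finite S" "S \<noteq> {}"
  shows "\<exists>x\<in>S. \<forall>y\<in>S. f y \<le> f x"
proof -
  have "Max (f ` S) \<in> f ` S" using assms by simp
  then obtain x where "x \<in> S" "f x = Max (f ` S)" by auto
  thus ?thesis using assms by (metis Max_ge finite_imageI imageI)
qed


lemma agent_bound:
  fixes V :: "'g set \<Rightarrow> real"
  assumes n1: "n \<ge> 1" and fin: "finite M" and al: "additive_leveled M V"
    and WR: "W \<subseteq> R" and RM: "R \<subseteq> M" and cW: "card W = s"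
    and maxW: "\<forall>T. T \<subseteq> R \<longrightarrow> card T = s \<longrightarrow> V T \<le> V W"
    and cs: "k = 0 \<or> s = k+1 \<or> (s = k \<and> card R \<ge> k+1) \<or> (s = k \<and> R = W \<and> card M = n*k)"
    and kdef: "k = card M div n"
  shows "real k / real (k+1) * mms n M V \<le> V W"
proof -
  have nn: "\<And>S. S \<subseteq> M \<Longrightarrow> V S \<ge> 0" and add: "\<And>S. S \<subseteq> M \<Longrightarrow> V S = (\<Sum>g\<in>S. V {g})"
    and lev: "\<And>S T. S \<subseteq> M \<Longrightarrow> T \<subseteq> M \<Longrightarrow> card S > card T \<Longrightarrow> V S > V T"
    using al unfolding additive_leveled_def nonneg_valuation_def additive_def leveled_def by auto
  have WM: "W \<subseteq> M" using WR RM by auto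
  obtain B where a: "is_allocation n M B" and mu: "\<forall>j<n. mms n M V \<le> V (B j)"
    and mu0: "mms n M V \<ge> 0"
    using mms_attained[OF n1 fin] al unfolding additive_leveled_def by blast
  have BM: "\<And>j. j < n \<Longrightarrow> B j \<subseteq> M" using a unfolding is_allocation_def by auto
  have sumc: "(\<Sum>j<n. card (B j)) = card M" by (rule alloc_card_sum[OF fin a])
  let ?mu = "mms n M V"
  have goal: "real k * ?mu \<le> real (k+1) * V W \<Longrightarrow> ?thesis"
    by (simp add: field_simps)
  have easy: "?mu < V W \<Longrightarrow> ?thesis"
  proof -
    assume "?mu < V W"
    have "real k * ?mu \<le> real (k+1) * ?mu" using mu0 by (simp add: algebra_simps)
    also have "\<dots> \<le> real (k+1) * V W" using \<open>?mu < V W\<close> by (intro mult_left_mono) auto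
    finally show ?thesis by (rule goal)
  qed
  have mlt: "card M < n * (k+1)"
  proof -
    have "card M = n * k + card M mod n" using kdef by simp
    moreover have "card M mod n < n" using n1 by simp
    ultimately show ?thesis by (simp add: algebra_simps)
  qed
  have "\<exists>j<n. card (B j) \<le> k"
  proof (rule ccontr)
    assume "\<not> ?thesis"
    hence "\<forall>j\<in>{..<n}. k+1 \<le> card (B j)" by auto
    from sum_bounded_below[of "{..<n}" "k+1" "\<lambda>j. card (B j)"] this have "n * (k+1) \<le> card M" using sumc by simp
    thus False using mlt by simp
  qed
  then obtain j where j: "j < n" "card (B j) \<le> k" by blast
  show ?thesis
  proof (cases "k = 0")
    case True thus ?thesis using nn[OF WM] by simp
  next
    case k0: False
    show ?thesis
    proof (cases "s = k+1")
      case True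
      have "V (B j) < V W" using lev[OF WM BM[OF j(1)]] j cW True by simp
      thus ?thesis using mu j by (intro easy) force
    next
      case sk1: False
      show ?thesis
      proof (cases "card R \<ge> k+1")
        case True
        have sk: "s = k" using cs sk1 k0 by auto
        obtain X where XR: "X \<subseteq> R" and cX: "card X = k+1" and fX: "finite X"
          using obtain_subset_with_card_n[OF True] by blast
        have XM: "X \<subseteq> M" using XR RM by auto
        have "X \<noteq> {}" using cX by auto
        then obtain x where x: "x \<in> X" "\<forall>y\<in>X. V {x} \<le> V {y}"
          using fin_argmin[OF fX, of "\<lambda>y. V {y}"] by blast
        let ?X' = "X - {x}"
        have cX': "card ?X' = k" using cX x fX by simp
        have "V ?X' \<le> V W" using maxW cX' sk XR by blast
        have X'M: "?X' \<subseteq> M" using XM by auto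
        have VX: "V X = V {x} + V ?X'"
          using add[OF XM] add[OF X'M] XM x fX by (simp add: sum.remove)
        have "(\<Sum>y\<in>?X'. V {x}) \<le> (\<Sum>y\<in>?X'. V {y})" using x by (intro sum_mono) auto
        hence kx: "real k * V {x} \<le> V ?X'" using add[OF X'M] XM cX' by simp
        have "V (B j) < V X" using lev[OF XM BM[OF j(1)]] j cX by simp
        hence "?mu < V X" using mu j by force
        have "real k * ?mu \<le> real k * V X" using \<open>?mu < V X\<close> by (simp add: mult_left_mono)
        also have "\<dots> \<le> real (k+1) * V ?X'" using VX kx by (simp add: algebra_simps)
        also have "\<dots> \<le> real (k+1) * V W" using \<open>V ?X' \<le> V W\<close> by (simp add: mult_left_mono)
        finally show ?thesis by (rule goal)
      next
        case False
        have sk: "s = k" and RW: "R = W" and mk: "card M = n * k" using cs sk1 k0 False by auto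
        have "W \<noteq> {}" using cW sk k0 by auto
        hence "M \<noteq> {}" using WM by auto
        then obtain g where g: "g \<in> M" "\<forall>y\<in>M. V {g} \<le> V {y}" using fin_argmin[OF fin, of "\<lambda>y. V {y}"] by blast
        have "g \<in> (\<Union>i<n. B i)" using a g unfolding is_allocation_def by auto
        then obtain i where i: "i < n" "g \<in> B i" by auto
        have fW: "finite W" using WM fin by (rule finite_subset)
        show ?thesis
        proof (cases "card (B i) \<le> k")
          case True
          let ?T = "B i - {g}"
          have fBi: "finite (B i)" using BM[OF i(1)] fin by (rule finite_subset)
          have TM: "?T \<subseteq> M" using BM[OF i(1)] by auto
          have "card ?T < k" using True i fBi k0 by simp
          hence VT: "V ?T < V W" using lev[OF WM TM] cW sk by simp
          have VB: "V (B i) = V {g} + V ?T"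
            using add[OF BM[OF i(1)]] add[OF TM] i fBi by (simp add: sum.remove)
          have "(\<Sum>y\<in>W. V {g}) \<le> (\<Sum>y\<in>W. V {y})" using g WM by (intro sum_mono) auto
          hence kg: "real k * V {g} \<le> V W" using add[OF WM] cW sk by simp
          have "real k * ?mu \<le> real k * V (B i)" using mu i by (simp add: mult_left_mono)
          also have "\<dots> = real k * V {g} + real k * V ?T" using VB by (simp add: algebra_simps)
          also have "\<dots> \<le> V W + real k * V W" using kg VT by (intro add_mono mult_left_mono) auto
          also have "\<dots> = real (k+1) * V W" by (simp add: algebra_simps)
          finally show ?thesis by (rule goal)
        next
          case False
          have "\<exists>j'<n. card (B j') < k"
          proof (rule ccontr)
            assume "\<not> ?thesis"
            hence ge: "\<forall>j'\<in>{..<n} - {i}. k \<le> card (B j')" by auto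
            have "(\<Sum>j<n. card (B j)) = card (B i) + (\<Sum>j\<in>{..<n} - {i}. card (B j))"
              using i by (simp add: sum.remove)
            moreover have "(n - 1) * k \<le> (\<Sum>j\<in>{..<n} - {i}. card (B j))"
              using sum_bounded_below[of "{..<n} - {i}" k "\<lambda>j. card (B j)"] ge i by simp
            ultimately have "card (B i) + (n-1)*k \<le> card M" using sumc by simp
            hence "k + 1 + (n-1)*k \<le> n * k" using False mk by simp
            thus False using n1 by (cases n) auto
          qed
          then obtain j' where "j' < n" "card (B j') < k" by blast
          hence "V (B j') < V W" using lev[OF WM BM] cW sk by simp
          thus ?thesis using mu \<open>j' < n\<close> by (intro easy) force
        qed
      qed
    qed
  qed
qed


definition ssz :: "nat \<Rightarrow> nat \<Rightarrow> nat \<Rightarrow> nat" where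
  "ssz n m t = (if t < n - m mod n then m div n else m div n + 1)"

lemma sum_ssz: "t \<le> n \<Longrightarrow> (\<Sum>u<t. ssz n m u) = t * (m div n) + (t - (n - m mod n))"
  by (induction t) (auto simp: ssz_def)

lemma sum_ssz_n: "n \<ge> 1 \<Longrightarrow> (\<Sum>u<n. ssz n m u) = m"
proof -
  assume n: "n \<ge> 1"
  have "m mod n < n" using n by simp
  hence "n - (n - m mod n) = m mod n" by simp
  hence "(\<Sum>u<n. ssz n m u) = n * (m div n) + m mod n" using sum_ssz[of n n m] by simp
  also have "\<dots> = m" by simp
  finally show ?thesis .
qed

lemma count_lemma:
  fixes t :: nat
  assumes fin: "finite M"
    and h: "\<forall>t<n. C t \<subseteq> M - (\<Union>u<t. C u) \<and> card (C t) = s t"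
  shows "t \<le> n \<Longrightarrow> (\<Union>u<t. C u) \<subseteq> M \<and> card (\<Union>u<t. C u) = (\<Sum>u<t. s u)"
proof (induction t)
  case 0 thus ?case by simp
next
  case (Suc t)
  hence IH: "(\<Union>u<t. C u) \<subseteq> M" "card (\<Union>u<t. C u) = (\<Sum>u<t. s u)" by auto
  have t: "t < n" using Suc by simp
  have e: "(\<Union>u<Suc t. C u) = (\<Union>u<t. C u) \<union> C t" by (auto simp: lessThan_Suc)
  have d: "(\<Union>u<t. C u) \<inter> C t = {}" using h t by auto
  have f1: "finite (\<Union>u<t. C u)" using IH(1) fin by (rule finite_subset)
  have f2: "finite (C t)" using h t fin by (meson Diff_subset finite_subset)
  show ?case unfolding e using IH h t card_Un_disjoint[OF f1 f2 d] by auto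
qed

primrec Pacc :: "(nat \<Rightarrow> 'g set \<Rightarrow> 'g set) \<Rightarrow> 'g set \<Rightarrow> nat \<Rightarrow> 'g set" where
  "Pacc pk M 0 = {}"
| "Pacc pk M (Suc t) = Pacc pk M t \<union> pk t (M - Pacc pk M t)"

lemma Pacc_UN: "Pacc pk M t = (\<Union>u<t. pk u (M - Pacc pk M u))"
  by (induction t) (auto simp: lessThan_Suc)

lemma exists_max_subset:
  fixes f :: "'g set \<Rightarrow> real"
  assumes "finite R" "s \<le> card R"
  shows "\<exists>X. X \<subseteq> R \<and> card X = s \<and> (\<forall>T. T \<subseteq> R \<longrightarrow> card T = s \<longrightarrow> f T \<le> f X)"
proof -
  let ?F = "{X. X \<subseteq> R \<and> card X = s}"
  have "?F \<subseteq> Pow R" by auto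
  hence "finite ?F" using assms(1) by (simp add: finite_subset)
  moreover have "?F \<noteq> {}" using obtain_subset_with_card_n[OF assms(2)] by blast
  ultimately obtain X where "X \<in> ?F" "\<forall>Y\<in>?F. f Y \<le> f X" using fin_argmax[of ?F f] by blast
  thus ?thesis by blast
qed


lemma arith_cs:
  fixes n m k r t cR :: nat
  assumes "m = n*k + r" "t < n - r" "cR = m - t*k"
  shows "k = 0 \<or> cR \<ge> k+1 \<or> (cR = k \<and> m = n*k)"
proof -
  have "t + r + 1 \<le> n" using assms by simp
  hence h: "(t + r + 1) * k \<le> n * k" by (rule mult_le_mono1)
  hence h2: "t*k + r*k + k \<le> n*k" by (simp add: algebra_simps)
  show ?thesis
  proof (cases "k = 0")
    case False
    show ?thesis
    proof (cases "cR \<ge> k+1")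
      case False
      have "r = 0" using False h2 assms by arith
      thus ?thesis using False h2 assms by arith
    qed simp
  qed simp
qed

lemma part1:
  fixes n :: nat and M :: "'g set" and V :: "nat \<Rightarrow> 'g set \<Rightarrow> real"
    and \<sigma> :: "nat \<Rightarrow> nat"
  assumes n1: "n \<ge> 1" and fin: "finite M"
    and al: "\<forall>i<n. additive_leveled M (V i)"
    and bij: "bij_betw \<sigma> {..<n} {..<n}"
    and po: "procedure_outcome n M V \<sigma> B"
  shows "alpha_MMS (real (card M div n) / real (card M div n + 1)) n M V B"
proof -
  define m where "m = card M"
  define k where "k = m div n"
  define r where "r = m mod n"
  define C where "C t = B (\<sigma> t)" for t
  define P where "P t = (\<Union>u<t. C u)" for t
  have spec: "C t \<subseteq> M - P t \<and> card (C t) = ssz n m t \<and>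
     (\<forall>T. T \<subseteq> M - P t \<longrightarrow> card T = ssz n m t \<longrightarrow> V (\<sigma> t) T \<le> V (\<sigma> t) (C t))"
    if "t < n" for t
    using po that unfolding procedure_outcome_def C_def P_def ssz_def Let_def m_def by auto
  have cnt: "P t \<subseteq> M \<and> card (P t) = (\<Sum>u<t. ssz n m u)" if "t \<le> n" for t
    using count_lemma[OF fin, of n C "ssz n m" t] spec that unfolding P_def by blast
  have PnM: "P n = M"
  proof -
    have "card (P n) = m" using cnt[of n] sum_ssz_n[OF n1] by simp
    thus ?thesis using cnt[of n] fin card_subset_eq m_def by blast
  qed
  have img: "\<sigma> ` {..<n} = {..<n}" using bij by (simp add: bij_betw_def)
  have UN: "(\<Union>i<n. B i) = M"
  proof -
    have "(\<Union>i<n. B i) = (\<Union>i\<in>\<sigma> ` {..<n}. B i)" using img by simp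
    also have "\<dots> = P n" by (simp add: P_def C_def)
    finally show ?thesis using PnM by simp
  qed
  have inv: "\<exists>t<n. i = \<sigma> t" if "i < n" for i
    using img that by (metis imageE lessThan_iff)
  have sub: "\<forall>i<n. B i \<subseteq> M"
  proof (intro allI impI)
    fix i assume "i < n"
    then obtain t where "t < n" "i = \<sigma> t" using inv by blast
    thus "B i \<subseteq> M" using spec[of t] unfolding C_def by auto
  qed
  have disj_aux: "C u \<inter> C t = {}" if "u < t" "t < n" for u t
  proof -
    have "C u \<subseteq> P t" using that unfolding P_def by auto
    thus ?thesis using spec[OF that(2)] by auto
  qed
  have disj: "\<forall>i<n. \<forall>j<n. i \<noteq> j \<longrightarrow> B i \<inter> B j = {}"
  proof (intro allI impI)
    fix i j assume ij: "i < n" "j < n" "i \<noteq> j"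
    obtain t where t: "t < n" "i = \<sigma> t" using inv ij by blast
    obtain u where u: "u < n" "j = \<sigma> u" using inv ij by blast
    have "t \<noteq> u" using t u ij by auto
    hence "u < t \<or> t < u" by auto
    thus "B i \<inter> B j = {}" using disj_aux[of u t] disj_aux[of t u] t u unfolding C_def by auto
  qed
  have alloc: "is_allocation n M B" unfolding is_allocation_def using sub disj UN by blast
  have bound: "real k / real (k+1) * mms n M (V i) \<le> V i (B i)" if iN: "i < n" for i
  proof -
    obtain t where t: "t < n" "i = \<sigma> t" using inv iN by blast
    have sp: "C t \<subseteq> M - P t" "card (C t) = ssz n m t"
      "\<forall>T. T \<subseteq> M - P t \<longrightarrow> card T = ssz n m t \<longrightarrow> V i T \<le> V i (C t)"
      using spec[OF t(1)] t(2) by auto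
    have ct: "card (M - P t) = m - card (P t)"
    proof -
      have "P t \<subseteq> M" using cnt[of t] t by simp
      moreover have "finite (P t)" using calculation fin by (rule finite_subset)
      ultimately show ?thesis using card_Diff_subset m_def by blast
    qed
    have cs: "k = 0 \<or> ssz n m t = k+1 \<or> (ssz n m t = k \<and> card (M - P t) \<ge> k+1)
       \<or> (ssz n m t = k \<and> M - P t = C t \<and> card M = n*k)"
    proof (cases "t < n - r")
      case True
      have s: "ssz n m t = k" using True unfolding ssz_def k_def r_def by simp
      have "card (P t) = t * k" using cnt[of t] t sum_ssz[of t n m] True
        unfolding k_def r_def by simp
      hence "k = 0 \<or> card (M - P t) \<ge> k+1 \<or> (card (M - P t) = k \<and> m = n*k)"
        using arith_cs[of m n k r t "card (M - P t)"] ct True unfolding k_def r_def by simp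
      moreover have "card (M - P t) = k \<Longrightarrow> M - P t = C t"
        using sp s fin by (metis card_subset_eq finite_Diff)
      ultimately show ?thesis using s m_def by auto
    next
      case False
      thus ?thesis unfolding ssz_def k_def r_def by simp
    qed
    have "real k / real (k+1) * mms n M (V i) \<le> V i (C t)"
      by (rule agent_bound[OF n1 fin al[rule_format, OF iN] _ _ sp(2) sp(3) cs])
         (use sp(1) k_def m_def in auto)
    thus ?thesis using t unfolding C_def by simp
  qed
  show ?thesis unfolding alpha_MMS_def using alloc bound k_def m_def by simp
qed


lemma exists_outcome:
  fixes n :: nat and M :: "'g set" and V :: "nat \<Rightarrow> 'g set \<Rightarrow> real"
    and \<sigma> :: "nat \<Rightarrow> nat"
  assumes n1: "n \<ge> 1" and fin: "finite M"
    and bij: "bij_betw \<sigma> {..<n} {..<n}"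
  shows "\<exists>B. procedure_outcome n M V \<sigma> B"
proof -
  define m where "m = card M"
  define pk where "pk t R = (SOME X. X \<subseteq> R \<and> card X = ssz n m t \<and>
      (\<forall>T. T \<subseteq> R \<longrightarrow> card T = ssz n m t \<longrightarrow> V (\<sigma> t) T \<le> V (\<sigma> t) X))" for t R
  define C where "C t = pk t (M - Pacc pk M t)" for t
  have good: "pk t R \<subseteq> R \<and> card (pk t R) = ssz n m t \<and>
      (\<forall>T. T \<subseteq> R \<longrightarrow> card T = ssz n m t \<longrightarrow> V (\<sigma> t) T \<le> V (\<sigma> t) (pk t R))"
    if "ssz n m t \<le> card R" "R \<subseteq> M" for t R
  proof -
    have "finite R" using that(2) fin by (rule finite_subset)
    from exists_max_subset[OF this that(1), of "V (\<sigma> t)"]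
    show ?thesis unfolding pk_def by (rule someI_ex)
  qed
  have room: "ssz n m t \<le> m - (\<Sum>u<t. ssz n m u)" if "t < n" for t
  proof -
    have "(\<Sum>u<Suc t. ssz n m u) \<le> (\<Sum>u<n. ssz n m u)"
      using that by (intro sum_mono2) auto
    thus ?thesis using sum_ssz_n[OF n1, of m] by simp
  qed
  have invar: "Pacc pk M t \<subseteq> M \<and> card (Pacc pk M t) = (\<Sum>u<t. ssz n m u)" if "t \<le> n" for t
    using that
  proof (induction t)
    case 0 thus ?case by simp
  next
    case (Suc t)
    hence IH: "Pacc pk M t \<subseteq> M" "card (Pacc pk M t) = (\<Sum>u<t. ssz n m u)" and t: "t < n" by auto
    let ?R = "M - Pacc pk M t"
    have fP: "finite (Pacc pk M t)" using IH(1) fin by (rule finite_subset)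
    have cR: "card ?R = m - (\<Sum>u<t. ssz n m u)" using IH fP m_def card_Diff_subset by metis
    have g: "pk t ?R \<subseteq> ?R" "card (pk t ?R) = ssz n m t"
      using good[of t ?R] room[OF t] cR by auto
    have fk: "finite (pk t ?R)" using g(1) fin by (meson Diff_subset finite_subset)
    have d: "Pacc pk M t \<inter> pk t ?R = {}" using g(1) by auto
    show ?case using IH g card_Un_disjoint[OF fP fk d] by auto
  qed
  have spec: "C t \<subseteq> M - Pacc pk M t \<and> card (C t) = ssz n m t \<and>
      (\<forall>T. T \<subseteq> M - Pacc pk M t \<longrightarrow> card T = ssz n m t \<longrightarrow> V (\<sigma> t) T \<le> V (\<sigma> t) (C t))"
    if "t < n" for t
  proof -
    have P: "Pacc pk M t \<subseteq> M" "card (Pacc pk M t) = (\<Sum>u<t. ssz n m u)" using invar[of t] that by auto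
    have fP: "finite (Pacc pk M t)" using P(1) fin by (rule finite_subset)
    have "card (M - Pacc pk M t) = m - (\<Sum>u<t. ssz n m u)" using P fP m_def card_Diff_subset by metis
    thus ?thesis unfolding C_def using good[of t "M - Pacc pk M t"] room[OF that] by auto
  qed
  have PU: "Pacc pk M t = (\<Union>u<t. C u)" for t using Pacc_UN[of pk M t] unfolding C_def .
  define B where "B i = C (inv_into {..<n} \<sigma> i)" for i
  have inj: "inj_on \<sigma> {..<n}" using bij by (simp add: bij_betw_def)
  have BC: "B (\<sigma> t) = C t" if "t < n" for t
    unfolding B_def using inv_into_f_f[OF inj] that by simp
  have UB: "(\<Union>u<t. B (\<sigma> u)) = Pacc pk M t" if "t < n" for t
    unfolding PU using BC that by auto
  have "procedure_outcome n M V \<sigma> B"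
    unfolding procedure_outcome_def
  proof (intro allI impI)
    fix t assume t: "t < n"
    show "let k = card M div n; r = card M mod n; s = if t < n - r then k else k + 1;
          R = M - (\<Union>u<t. B (\<sigma> u))
        in B (\<sigma> t) \<subseteq> R \<and> card (B (\<sigma> t)) = s \<and>
           (\<forall>T. T \<subseteq> R \<longrightarrow> card T = s \<longrightarrow> V (\<sigma> t) T \<le> V (\<sigma> t) (B (\<sigma> t)))"
      using spec[OF t] BC[OF t] UB[OF t] unfolding Let_def ssz_def m_def by simp
  qed
  thus ?thesis by blast
qed

theorem mainTheorem1:
  fixes n :: nat and M :: "'g set" and V :: "nat \<Rightarrow> 'g set \<Rightarrow> real"
    and \<sigma> :: "nat \<Rightarrow> nat"
  assumes "n \<ge> 1"
    and "finite M"
    and "\<forall>i<n. additive_leveled M (V i)"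
    and "bij_betw \<sigma> {..<n} {..<n}"
  shows "(\<forall>B. procedure_outcome n M V \<sigma> B \<longrightarrow>
            alpha_MMS (real (card M div n) / real (card M div n + 1)) n M V B)
         \<and> (\<exists>B. alpha_MMS (real (card M div n) / real (card M div n + 1)) n M V B)"
  using part1[OF assms] exists_outcome[OF assms(1,2,4), of V] by blast

end
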